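(* Let $R$ be an integral domain in which every element is a finite sum of units. Let $\varphi$ be an automorphism of the additive group $(R,+)$ and $\Phi$ an automorphism of the multiplicative group $U(R)$ such that $\Phi(u)\varphi(1)=\varphi(u)$ for all $u\in U(R)$. Then $\Phi$ extends to a ring automorphism $\overline{\Phi}$ of $R$ (i.e. $\overline{\Phi}|_{U(R)}=\Phi$). *)

theory Defs
  imports Main
begin

end

theory Submission
  imports Defs
begin

theorem mainTheorem14:
  fixes \<phi> :: "'a::idom \<Rightarrow> 'a" and \<Phi> :: "'a \<Rightarrow> 'a"
  assumes sum_units: "\<forall>x::'a. \<exists>us. (\<forall>u\<in>set us. u dvd 1) \<and> x = sum_list us"
    and \<phi>_bij: "bij \<phi>"
    and \<phi>_add: "\<forall>x y. \<phi> (x + y) = \<phi> x + \<phi> y"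
    and \<Phi>_bij: "bij_betw \<Phi> {u. u dvd 1} {u. u dvd 1}"
    and \<Phi>_mult: "\<forall>u v. u dvd 1 \<longrightarrow> v dvd 1 \<longrightarrow> \<Phi> (u * v) = \<Phi> u * \<Phi> v"
    and compat: "\<forall>u. u dvd 1 \<longrightarrow> \<Phi> u * \<phi> 1 = \<phi> u"
  shows "\<exists>\<Psi>::'a \<Rightarrow> 'a. bij \<Psi> \<and> (\<forall>x y. \<Psi> (x + y) = \<Psi> x + \<Psi> y)
            \<and> (\<forall>x y. \<Psi> (x * y) = \<Psi> x * \<Psi> y) \<and> \<Psi> 1 = 1
            \<and> (\<forall>u. u dvd 1 \<longrightarrow> \<Psi> u = \<Phi> u)"
proof -
  define c where "c = \<phi> 1"
  have phi0: "\<phi> 0 = 0"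
  proof -
    have "\<phi> 0 + \<phi> 0 = \<phi> 0 + 0" using \<phi>_add[rule_format, of 0 0] by simp
    then show ?thesis by (rule add_left_imp_eq)
  qed
  have injphi: "inj \<phi>" using \<phi>_bij bij_is_inj by blast
  have c0: "c \<noteq> 0" unfolding c_def using phi0 injphi by (metis injD one_neq_zero)
  have ex_list: "\<exists>y. y * c = \<phi> (sum_list us)" if "\<forall>u\<in>set us. u dvd 1" for us
    using that
  proof (induction us)
    case Nil then show ?case using phi0 by (intro exI[of _ 0]) simp
  next
    case (Cons u us)
    then obtain y where y: "y * c = \<phi> (sum_list us)" by auto
    have "(\<Phi> u + y) * c = \<phi> (sum_list (u # us))"
      using y compat Cons.prems \<phi>_add by (simp add: c_def distrib_right)
    then show ?case by blast
  qed
  have ex: "\<exists>y. y * c = \<phi> x" for x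
  proof -
    obtain us where "\<forall>u\<in>set us. u dvd 1" "x = sum_list us" using sum_units by blast
    then show ?thesis using ex_list by blast
  qed
  define \<Psi> where "\<Psi> x = (THE y. y * c = \<phi> x)" for x
  have Psi: "\<Psi> x * c = \<phi> x" for x
  proof -
    obtain y where y: "y * c = \<phi> x" using ex by blast
    have "(THE y. y * c = \<phi> x) = y"
    proof (rule the_equality)
      show "y * c = \<phi> x" by (rule y)
    next
      fix y' assume "y' * c = \<phi> x"
      then show "y' = y" using y c0 by (metis mult_cancel_right)
    qed
    then show ?thesis using y \<Psi>_def by simp
  qed
  have Psi_eq: "\<Psi> x = y \<longleftrightarrow> y * c = \<phi> x" for x y
    using Psi c0 by (metis mult_cancel_right)
  have add: "\<Psi> (x + y) = \<Psi> x + \<Psi> y" for x y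
    unfolding Psi_eq using Psi \<phi>_add by (simp add: distrib_right)
  have unit: "\<Psi> u = \<Phi> u" if "u dvd 1" for u
    unfolding Psi_eq using compat that by (simp add: c_def)
  have Psi0: "\<Psi> 0 = 0"
  proof -
    have "\<Psi> 0 + \<Psi> 0 = \<Psi> 0 + 0" using add[of 0 0] by simp
    then show ?thesis by (rule add_left_imp_eq)
  qed
  have Psi_sum: "\<Psi> (sum_list us) = sum_list (map \<Psi> us)" for us
    by (induction us) (auto simp: Psi0 add)
  have unit_mult: "\<Psi> (u * y) = \<Psi> u * \<Psi> y" if u: "u dvd 1" for u y
  proof -
    obtain vs where vs: "\<forall>v\<in>set vs. v dvd 1" "y = sum_list vs" using sum_units by blast
    have "\<Psi> (u * sum_list vs) = \<Psi> u * \<Psi> (sum_list vs)" using vs(1)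
    proof (induction vs)
      case Nil then show ?case by (simp add: Psi0)
    next
      case (Cons v vs)
      have v: "v dvd 1" using Cons.prems by simp
      have uv: "u * v dvd 1" using mult_dvd_mono[OF u v] by simp
      have "\<Psi> (u * v) = \<Psi> u * \<Psi> v"
        using unit[OF uv] unit[OF u] unit[OF v] u v \<Phi>_mult by simp
      then show ?case using Cons by (simp add: distrib_left add)
    qed
    then show ?thesis using vs by simp
  qed
  have mult: "\<Psi> (x * y) = \<Psi> x * \<Psi> y" for x y
  proof -
    obtain us where us: "\<forall>v\<in>set us. v dvd 1" "x = sum_list us" using sum_units by blast
    have "\<Psi> (sum_list us * y) = \<Psi> (sum_list us) * \<Psi> y" using us(1)
    proof (induction us)
      case Nil then show ?case by (simp add: Psi0)
    next
      case (Cons v vs)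
      then show ?case by (simp add: distrib_right add unit_mult)
    qed
    then show ?thesis using us by simp
  qed
  have Phi1: "\<Phi> 1 = 1"
  proof -
    have "\<Phi> 1 = \<Phi> 1 * \<Phi> 1" using \<Phi>_mult by (metis dvd_refl mult_1)
    moreover have "\<Phi> 1 dvd 1" using \<Phi>_bij bij_betwE by fastforce
    ultimately show ?thesis by (metis mult_cancel_left1 dvd_0_left_iff zero_neq_one)
  qed
  have inj: "inj \<Psi>"
  proof (rule injI)
    fix x y assume "\<Psi> x = \<Psi> y"
    then have "\<phi> x = \<phi> y" using Psi[of x] Psi[of y] by simp
    then show "x = y" using injphi by (rule injD[rotated])
  qed
  have surj: "surj \<Psi>"
  proof -
    have "z \<in> range \<Psi>" for z
    proof -
      obtain ws where ws: "\<forall>w\<in>set ws. w dvd 1" "z = sum_list ws" using sum_units by blast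
      have "sum_list ws \<in> range \<Psi>" using ws(1)
      proof (induction ws)
        case Nil
        have "\<Psi> 0 \<in> range \<Psi>" by (rule rangeI)
        then show ?case using Psi0 by simp
      next
        case (Cons w ws)
        then obtain x where x: "sum_list ws = \<Psi> x" by (auto simp del: sum_list.Cons)
        have "w \<in> \<Phi> ` {u. u dvd 1}" 
        proof -
          have "w \<in> {u. u dvd 1}" using Cons.prems by simp
          then show ?thesis using bij_betw_imp_surj_on[OF \<Phi>_bij] by simp
        qed
        then obtain u where "u dvd 1" "w = \<Phi> u" by auto
        then have "w = \<Psi> u" using unit by simp
        then have "sum_list (w # ws) = \<Psi> (u + x)" using x add by simp
        then show ?case by (rule image_eqI) simp
      qed
      then show ?thesis using ws by simp
    qed
    then show ?thesis by blast
  qed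
  show ?thesis
  proof (rule exI[of _ \<Psi>], intro conjI allI impI)
    show "bij \<Psi>" using inj surj by (simp add: bij_def)
    show "\<Psi> 1 = 1" using unit[of 1] Phi1 by simp
    show "\<Psi> (x + y) = \<Psi> x + \<Psi> y" for x y by (rule add)
    show "\<Psi> (x * y) = \<Psi> x * \<Psi> y" for x y by (rule mult)
    show "\<Psi> u = \<Phi> u" if "u dvd 1" for u using that by (rule unit)
  qed
qed

end
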